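(* Let $A, C, D$ be binary random variables, with $A$ taking values $a,\overline{a}$, $C$ taking values $c,\overline{c}$, $D$ taking values $d,\overline{d}$, and let $Y$ be a real random variable with finite expectation. Suppose the joint distribution factorizes as \[ p(A,C,D,Y)=p(C)\,p(D\mid C)\,p(A\mid C)\,p(Y\mid A,C). \] Assume that $C$ and $D$ are dependent, and that every event $\{A=x, C=y, D=z\}$ has positive probability. If $E[Y\mid A,D]$ is monotone in $D$, then $RD_{obs}$ lies between $RD_{true}$ and $RD_{crude}$ (i.e. $\min(RD_{true},RD_{crude})\le RD_{obs}\le \max(RD_{true},RD_{crude})$).
   Context: Define $RD_{true}=E[Y|a,c]p(c)+E[Y|a,\overline{c}]p(\overline{c})-E[Y|\overline{a},c]p(c)-E[Y|\overline{a},\overline{c}]p(\overline{c})$ (the average causal effect of $A$ on $Y$), $RD_{crude}=E[Y|a]-E[Y|\overline{a}]$, and $RD_{obs}=E[Y|a,d]p(d)+E[Y|a,\overline{d}]p(\overline{d})-E[Y|\overline{a},d]p(d)-E[Y|\overline{a},\overline{d}]p(\overline{d})$. $E[Y\mid A,D]$ is nondecreasing in $D$ if $E[Y\mid a,d]\ge E[Y\mid a,\overline{d}]$ and $E[Y\mid \overline{a},d]\ge E[Y\mid \overline{a},\overline{d}]$; nonincreasing if both inequalities are reversed; monotone if it is either. *)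

theory Defs
  imports "HOL-Probability.Probability"
begin

text \<open>Binary random variables are modelled as bool-valued functions: True stands for
  the value a (resp. c, d) and False for abar (resp. cbar, dbar).\<close>

definition ev :: "'w measure \<Rightarrow> ('w \<Rightarrow> 'b) \<Rightarrow> 'b \<Rightarrow> 'w set" where
  "ev M X v = {\<omega> \<in> space M. X \<omega> = v}"

definition condE :: "'w measure \<Rightarrow> ('w \<Rightarrow> real) \<Rightarrow> 'w set \<Rightarrow> real" where
  "condE M Y S = (\<integral>\<omega>. indicator S \<omega> * Y \<omega> \<partial>M) / measure M S"

definition RD_true :: "'w measure \<Rightarrow> ('w \<Rightarrow> bool) \<Rightarrow> ('w \<Rightarrow> bool) \<Rightarrow> ('w \<Rightarrow> real) \<Rightarrow> real" where
  "RD_true M A C Y =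
     condE M Y (ev M A True \<inter> ev M C True) * measure M (ev M C True)
   + condE M Y (ev M A True \<inter> ev M C False) * measure M (ev M C False)
   - condE M Y (ev M A False \<inter> ev M C True) * measure M (ev M C True)
   - condE M Y (ev M A False \<inter> ev M C False) * measure M (ev M C False)"

definition RD_crude :: "'w measure \<Rightarrow> ('w \<Rightarrow> bool) \<Rightarrow> ('w \<Rightarrow> real) \<Rightarrow> real" where
  "RD_crude M A Y = condE M Y (ev M A True) - condE M Y (ev M A False)"

definition RD_obs :: "'w measure \<Rightarrow> ('w \<Rightarrow> bool) \<Rightarrow> ('w \<Rightarrow> bool) \<Rightarrow> ('w \<Rightarrow> real) \<Rightarrow> real" where
  "RD_obs M A D Y =
     condE M Y (ev M A True \<inter> ev M D True) * measure M (ev M D True)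
   + condE M Y (ev M A True \<inter> ev M D False) * measure M (ev M D False)
   - condE M Y (ev M A False \<inter> ev M D True) * measure M (ev M D True)
   - condE M Y (ev M A False \<inter> ev M D False) * measure M (ev M D False)"

definition nondecr_in_D :: "'w measure \<Rightarrow> ('w \<Rightarrow> bool) \<Rightarrow> ('w \<Rightarrow> bool) \<Rightarrow> ('w \<Rightarrow> real) \<Rightarrow> bool" where
  "nondecr_in_D M A D Y \<longleftrightarrow>
     condE M Y (ev M A True \<inter> ev M D True) \<ge> condE M Y (ev M A True \<inter> ev M D False) \<and>
     condE M Y (ev M A False \<inter> ev M D True) \<ge> condE M Y (ev M A False \<inter> ev M D False)"

definition nonincr_in_D :: "'w measure \<Rightarrow> ('w \<Rightarrow> bool) \<Rightarrow> ('w \<Rightarrow> bool) \<Rightarrow> ('w \<Rightarrow> real) \<Rightarrow> bool" where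
  "nonincr_in_D M A D Y \<longleftrightarrow>
     condE M Y (ev M A True \<inter> ev M D True) \<le> condE M Y (ev M A True \<inter> ev M D False) \<and>
     condE M Y (ev M A False \<inter> ev M D True) \<le> condE M Y (ev M A False \<inter> ev M D False)"

definition monotone_in_D :: "'w measure \<Rightarrow> ('w \<Rightarrow> bool) \<Rightarrow> ('w \<Rightarrow> bool) \<Rightarrow> ('w \<Rightarrow> real) \<Rightarrow> bool" where
  "monotone_in_D M A D Y \<longleftrightarrow> nondecr_in_D M A D Y \<or> nonincr_in_D M A D Y"

text \<open>The factorization p(A,C,D,Y) = p(C) p(D|C) p(A|C) p(Y|A,C), stated on all
  events {A=x, C=y, D=z, Y \<in> B} with B Borel (conditional probabilities as ratios;
  all conditioning events have positive probability under the positivity assumption).\<close>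
definition factorizes :: "'w measure \<Rightarrow> ('w \<Rightarrow> bool) \<Rightarrow> ('w \<Rightarrow> bool) \<Rightarrow> ('w \<Rightarrow> bool) \<Rightarrow> ('w \<Rightarrow> real) \<Rightarrow> bool" where
  "factorizes M A C D Y \<longleftrightarrow>
     (\<forall>x y z B. B \<in> sets borel \<longrightarrow>
        measure M (ev M A x \<inter> ev M C y \<inter> ev M D z \<inter> (Y -` B \<inter> space M)) =
          measure M (ev M C y)
        * (measure M (ev M D z \<inter> ev M C y) / measure M (ev M C y))
        * (measure M (ev M A x \<inter> ev M C y) / measure M (ev M C y))
        * (measure M ((Y -` B \<inter> space M) \<inter> ev M A x \<inter> ev M C y) / measure M (ev M A x \<inter> ev M C y)))"

end

theory Submission
  imports Defs
begin


lemma cancelX: "(X::real) \<noteq> 0 \<Longrightarrow> X/c * (y/X) = y/c" by (simp add: field_simps)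

lemma px_W:
  fixes a b q1 q0 :: real
  assumes "a>0" "b>0" "0<q1" "q1<1" "0<q0" "q0<1"
  shows "a*q1/(a*q1+b*q0) - a*(1-q1)/(a*(1-q1)+b*(1-q0))
        = a*b*(q1-q0)/((a*q1+b*q0)*(a*(1-q1)+b*(1-q0)))"
proof -
  have "a*q1+b*q0 > 0" "a*(1-q1)+b*(1-q0) > 0" using assms by (auto intro: add_pos_pos)
  then show ?thesis by (simp add: field_simps)
qed

lemma px_g:
  fixes a b q1 q0 \<pi> :: real
  assumes "a>0" "b>0" "0<q1" "q1<1" "0<q0" "q0<1"
  defines "W1 \<equiv> a*q1/(a*q1+b*q0)" and "W0 \<equiv> a*(1-q1)/(a*(1-q1)+b*(1-q0))"
  shows "(\<pi>*q1 + (1-\<pi>)*q0) * W1 + (1 - (\<pi>*q1 + (1-\<pi>)*q0)) * W0 - \<pi>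
       = (1 - (q1-q0)*(W1-W0)) * (a/(a+b) - \<pi>)"
proof -
  have d1: "a*q1+b*q0 > 0" and d0: "a*(1-q1)+b*(1-q0) > 0" using assms by (auto intro: add_pos_pos)
  have ab: "a+b>0" using assms by simp
  have s1: "(a*q1+b*q0)/(a+b) * W1 = a*q1/(a+b)"
    unfolding W1_def using d1 by (intro cancelX) simp
  have s2: "1 - (a*q1+b*q0)/(a+b) = (a*(1-q1)+b*(1-q0))/(a+b)"
    using ab by (simp add: field_simps)
  have s3: "(a*(1-q1)+b*(1-q0))/(a+b) * W0 = a*(1-q1)/(a+b)"
    unfolding W0_def using d0 by (intro cancelX) simp
  have s: "(a*q1+b*q0)/(a+b) * W1 + (1 - (a*q1+b*q0)/(a+b)) * W0 = a/(a+b)"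
    unfolding s2 s1 s3 add_divide_distrib[symmetric] by (simp add: algebra_simps)
  have t: "(\<pi>*q1 + (1-\<pi>)*q0) - (a*q1+b*q0)/(a+b) = (q1-q0)*(\<pi> - a/(a+b))"
    using ab by (simp add: field_simps)
  have "(\<pi>*q1 + (1-\<pi>)*q0) * W1 + (1 - (\<pi>*q1 + (1-\<pi>)*q0)) * W0 - \<pi>
     = ((\<pi>*q1 + (1-\<pi>)*q0) - (a*q1+b*q0)/(a+b))*(W1-W0)
       + ((a*q1+b*q0)/(a+b) * W1 + (1 - (a*q1+b*q0)/(a+b)) * W0) - \<pi>"
    by algebra
  also have "\<dots> = (q1-q0)*(\<pi> - a/(a+b))*(W1-W0) + a/(a+b) - \<pi>" unfolding t s ..
  also have "\<dots> = (1 - (q1-q0)*(W1-W0)) * (a/(a+b) - \<pi>)" by algebra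
  finally show ?thesis .
qed

lemma px_bnd:
  fixes a b q1 q0 :: real
  assumes "a>0" "b>0" "0<q1" "q1<1" "0<q0" "q0<1"
  defines "W1 \<equiv> a*q1/(a*q1+b*q0)" and "W0 \<equiv> a*(1-q1)/(a*(1-q1)+b*(1-q0))"
  shows "0 \<le> (q1-q0)*(W1-W0)" "(q1-q0)*(W1-W0) \<le> 1"
proof -
  have d1: "a*q1+b*q0 > 0" and d0: "a*(1-q1)+b*(1-q0) > 0" using assms by (auto intro: add_pos_pos)
  have e: "W1 - W0 = a*b*(q1-q0)/((a*q1+b*q0)*(a*(1-q1)+b*(1-q0)))"
    unfolding W1_def W0_def using px_W assms by blast
  have "(q1-q0)*(W1-W0) = (q1-q0)*(q1-q0) * (a*b/((a*q1+b*q0)*(a*(1-q1)+b*(1-q0))))"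
    unfolding e by simp
  moreover have "a*b/((a*q1+b*q0)*(a*(1-q1)+b*(1-q0))) \<ge> 0" using d1 d0 assms by simp
  ultimately show "0 \<le> (q1-q0)*(W1-W0)" by (metis zero_le_square mult_nonneg_nonneg)
  have "0 < W1" "W1 < 1" "0 < W0" "W0 < 1" unfolding W1_def W0_def using d1 d0 assms
    by (auto simp: field_simps)
  moreover have "\<bar>q1-q0\<bar> < 1" using assms by auto
  ultimately have "\<bar>(q1-q0)*(W1-W0)\<bar> \<le> 1"
    by (simp add: abs_mult) (smt (verit) mult_le_one abs_ge_zero)
  then show "(q1-q0)*(W1-W0) \<le> 1" by simp
qed

lemma Eform: "(x::real)+y \<noteq> 0 \<Longrightarrow> (x*e1 + y*e0)/(x+y) = e0 + (e1-e0)*(x/(x+y))"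
  by (simp add: field_simps)

lemma final_step:
  fixes T Cr Ob t1 t0 l1 l0 :: real
  assumes "Ob - T = l1*t1 + l0*t0" "Cr - T = t1 + t0" "0 \<le> l1" "l1 \<le> 1" "0 \<le> l0" "l0 \<le> 1"
    and "0 \<le> t1*t0 \<or> (l1 = 1 \<and> l0 = 1)"
  shows "min T Cr \<le> Ob \<and> Ob \<le> max T Cr"
proof (cases "l1 = 1 \<and> l0 = 1")
  case True then have "Ob = Cr" using assms by simp
  then show ?thesis by (auto simp: min_def max_def)
next
  case False
  then have "0 \<le> t1*t0" using assms(7) by blast
  then have "(0 \<le> t1 \<and> 0 \<le> t0) \<or> (t1 \<le> 0 \<and> t0 \<le> 0)"
    by (metis mult_pos_neg mult_neg_pos not_le order.strict_iff_order)
  moreover have "l1*t1 \<le> t1" if "0 \<le> t1" using mult_right_mono[of l1 1 t1] that assms by simp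
  moreover have "t1 \<le> l1*t1" if "t1 \<le> 0" using mult_right_mono_neg[of l1 1 t1] that assms by simp
  moreover have "l0*t0 \<le> t0" if "0 \<le> t0" using mult_right_mono[of l0 1 t0] that assms by simp
  moreover have "t0 \<le> l0*t0" if "t0 \<le> 0" using mult_right_mono_neg[of l0 1 t0] that assms by simp
  moreover have "0 \<le> l1*t1" if "0 \<le> t1" using that assms by simp
  moreover have "l1*t1 \<le> 0" if "t1 \<le> 0" using that assms by (simp add: mult_nonneg_nonpos)
  moreover have "0 \<le> l0*t0" if "0 \<le> t0" using that assms by simp
  moreover have "l0*t0 \<le> 0" if "t0 \<le> 0" using that assms by (simp add: mult_nonneg_nonpos)
  ultimately show ?thesis using assms(1,2) by linarith
qed

lemma core:
  fixes a1 a0 b1 b0 q1 q0 e11 e10 e01 e00 :: real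
  assumes pos: "a1>0" "a0>0" "b1>0" "b0>0" and q: "0<q1" "q1<1" "0<q0" "q0<1"
  defines "\<pi> \<equiv> a1+a0"
  defines "Pd \<equiv> \<pi>*q1 + (1-\<pi>)*q0"
  defines "E11 \<equiv> (a1*q1*e11 + b1*q0*e10)/(a1*q1+b1*q0)"
  defines "E10 \<equiv> (a1*(1-q1)*e11 + b1*(1-q0)*e10)/(a1*(1-q1)+b1*(1-q0))"
  defines "E01 \<equiv> (a0*q1*e01 + b0*q0*e00)/(a0*q1+b0*q0)"
  defines "E00 \<equiv> (a0*(1-q1)*e01 + b0*(1-q0)*e00)/(a0*(1-q1)+b0*(1-q0))"
  assumes sum1: "a1+a0+b1+b0 = 1"
    and mono: "(E10 \<le> E11 \<and> E00 \<le> E01) \<or> (E11 \<le> E10 \<and> E01 \<le> E00)"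
  shows "min (e11*\<pi> + e10*(1-\<pi>) - e01*\<pi> - e00*(1-\<pi>))
             ((a1*e11+b1*e10)/(a1+b1) - (a0*e01+b0*e00)/(a0+b0))
         \<le> E11*Pd + E10*(1-Pd) - E01*Pd - E00*(1-Pd)
       \<and> E11*Pd + E10*(1-Pd) - E01*Pd - E00*(1-Pd)
         \<le> max (e11*\<pi> + e10*(1-\<pi>) - e01*\<pi> - e00*(1-\<pi>))
             ((a1*e11+b1*e10)/(a1+b1) - (a0*e01+b0*e00)/(a0+b0))"
proof -
  define W11 where "W11 = a1*q1/(a1*q1+b1*q0)"
  define W10 where "W10 = a1*(1-q1)/(a1*(1-q1)+b1*(1-q0))"
  define W01 where "W01 = a0*q1/(a0*q1+b0*q0)"
  define W00 where "W00 = a0*(1-q1)/(a0*(1-q1)+b0*(1-q0))"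
  define d1 where "d1 = e11 - e10"
  define d0 where "d0 = e01 - e00"
  define h1 where "h1 = a1/(a1+b1) - \<pi>"
  define h0 where "h0 = a0/(a0+b0) - \<pi>"
  define l1 where "l1 = 1 - (q1-q0)*(W11-W10)"
  define l0 where "l0 = 1 - (q1-q0)*(W01-W00)"
  have dd: "a1*q1+b1*q0 > 0" "a1*(1-q1)+b1*(1-q0) > 0" "a0*q1+b0*q0 > 0" "a0*(1-q1)+b0*(1-q0) > 0"
    using pos q by (auto intro!: add_pos_pos)
  have eE: "E11 = e10 + d1*W11" "E10 = e10 + d1*W10" "E01 = e00 + d0*W01" "E00 = e00 + d0*W00"
    unfolding E11_def E10_def E01_def E00_def W11_def W10_def W01_def W00_def d1_def d0_def
    using dd by (auto simp: field_simps)
  have cE: "(a1*e11+b1*e10)/(a1+b1) = e10 + d1*(a1/(a1+b1))" "(a0*e01+b0*e00)/(a0+b0) = e00 + d0*(a0/(a0+b0))"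
    unfolding d1_def d0_def using pos by (auto simp: Eform)
  have g1: "Pd*W11 + (1-Pd)*W10 - \<pi> = l1*h1"
    unfolding Pd_def W11_def W10_def l1_def h1_def using px_g[OF pos(1) pos(3) q] by simp
  have g0: "Pd*W01 + (1-Pd)*W00 - \<pi> = l0*h0"
    unfolding Pd_def W01_def W00_def l0_def h0_def using px_g[OF pos(2) pos(4) q] by simp
  have b1: "0 \<le> (q1-q0)*(W11-W10)" "(q1-q0)*(W11-W10) \<le> 1"
    unfolding W11_def W10_def using px_bnd[OF pos(1) pos(3) q] by auto
  have b0: "0 \<le> (q1-q0)*(W01-W00)" "(q1-q0)*(W01-W00) \<le> 1"
    unfolding W01_def W00_def using px_bnd[OF pos(2) pos(4) q] by auto
  have OT: "(E11*Pd + E10*(1-Pd) - E01*Pd - E00*(1-Pd)) - (e11*\<pi> + e10*(1-\<pi>) - e01*\<pi> - e00*(1-\<pi>))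
       = l1*(d1*h1) + l0*(-d0*h0)"
  proof -
    have "(E11*Pd + E10*(1-Pd) - E01*Pd - E00*(1-Pd)) - (e11*\<pi> + e10*(1-\<pi>) - e01*\<pi> - e00*(1-\<pi>))
       = d1*(Pd*W11 + (1-Pd)*W10 - \<pi>) - d0*(Pd*W01 + (1-Pd)*W00 - \<pi>)"
      unfolding eE d1_def d0_def by algebra
    then show ?thesis unfolding g1 g0 by simp
  qed
  have CT: "((a1*e11+b1*e10)/(a1+b1) - (a0*e01+b0*e00)/(a0+b0)) - (e11*\<pi> + e10*(1-\<pi>) - e01*\<pi> - e00*(1-\<pi>))
       = d1*h1 + (-d0*h0)"
    unfolding cE h1_def h0_def d1_def d0_def by algebra
  have key: "0 \<le> (d1*h1)*(-d0*h0) \<or> (l1 = 1 \<and> l0 = 1)"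
  proof (cases "q1 = q0")
    case True then show ?thesis unfolding l1_def l0_def by simp
  next
    case False
    have w1: "W11 - W10 = (q1-q0) * (a1*b1/((a1*q1+b1*q0)*(a1*(1-q1)+b1*(1-q0))))"
      unfolding W11_def W10_def using px_W[OF pos(1) pos(3) q] by simp
    have w0: "W01 - W00 = (q1-q0) * (a0*b0/((a0*q1+b0*q0)*(a0*(1-q1)+b0*(1-q0))))"
      unfolding W01_def W00_def using px_W[OF pos(2) pos(4) q] by simp
    define k1 where "k1 = a1*b1/((a1*q1+b1*q0)*(a1*(1-q1)+b1*(1-q0)))"
    define k0 where "k0 = a0*b0/((a0*q1+b0*q0)*(a0*(1-q1)+b0*(1-q0)))"
    have k: "k1 > 0" "k0 > 0" unfolding k1_def k0_def using dd pos by auto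
    have m1: "E11 - E10 = (d1*(q1-q0))*k1" unfolding eE using w1 k1_def by (simp add: algebra_simps)
    have m0: "E01 - E00 = (d0*(q1-q0))*k0" unfolding eE using w0 k0_def by (simp add: algebra_simps)
    have "0 \<le> (E11 - E10)*(E01 - E00)" using mono
      by (auto intro: mult_nonneg_nonneg mult_nonpos_nonpos)
    then have P0: "0 \<le> (d1*d0)*((q1-q0)*(q1-q0)*(k1*k0))" unfolding m1 m0 by (simp add: algebra_simps)
    have "(q1-q0)*(q1-q0) > 0" using False by (cases "q1 < q0") (auto simp: mult_pos_pos mult_neg_neg)
    then have "(q1-q0)*(q1-q0)*(k1*k0) > 0" using k by (simp add: mult_pos_pos)
    with P0 have dd0: "0 \<le> d1*d0"
      by (simp add: zero_le_mult_iff)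
    have "(a1+b1)*h1 = a1 - (a1+b1)*\<pi>" "(a0+b0)*h0 = a0 - (a0+b0)*\<pi>"
      unfolding h1_def h0_def using pos by (simp_all add: right_diff_distrib)
    then have "(a1+b1)*h1 + (a0+b0)*h0 = \<pi> - (a1+b1+a0+b0)*\<pi>" unfolding \<pi>_def by algebra
    also have "\<pi> - (a1+b1+a0+b0)*\<pi> = 0" using sum1 by (simp add: algebra_simps)
    finally have "(a1+b1)*h1 + (a0+b0)*h0 = 0" .
    then have Y: "(a0+b0)*h0 = -((a1+b1)*h1)" by linarith
    have "((a1+b1)*(a0+b0))*(h1*h0) = ((a1+b1)*h1)*((a0+b0)*h0)" by algebra
    then have "((a1+b1)*(a0+b0))*(h1*h0) = -((a1+b1)*h1)*((a1+b1)*h1)" unfolding Y by simp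
    then have "((a1+b1)*(a0+b0))*(h1*h0) \<le> 0" by simp
    moreover have "(a1+b1)*(a0+b0) > 0" using pos by simp
    ultimately have "h1*h0 \<le> 0" by (meson mult_pos_pos not_le)
    then have "0 \<le> (d1*d0)*(-(h1*h0))" using dd0 mult_nonneg_nonpos[of "d1*d0" "h1*h0"] by simp
    then show ?thesis by (simp add: algebra_simps)
  qed
  show ?thesis
    apply (rule final_step[OF OT CT])
    using b1 b0 key unfolding l1_def l0_def by auto
qed



lemma G:
  fixes M :: "'w measure" and Y :: "'w \<Rightarrow> real"
  assumes fm: "finite_measure M" and S1: "S1 \<in> sets M" and S2: "S2 \<in> sets M"
    and Y: "Y \<in> borel_measurable M" and k: "0 \<le> k"
    and eq: "\<And>B. B \<in> sets borel \<Longrightarrow>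
      measure M (S1 \<inter> (Y -` B \<inter> space M)) = k * measure M (S2 \<inter> (Y -` B \<inter> space M))"
  shows "(\<integral>\<omega>. indicator S1 \<omega> * Y \<omega> \<partial>M) = k * (\<integral>\<omega>. indicator S2 \<omega> * Y \<omega> \<partial>M)"
proof -
  interpret finite_measure M by fact
  define N1 where "N1 = distr (density M (\<lambda>x. ennreal (indicator S1 x))) borel Y"
  define N2 where "N2 = density (distr (density M (\<lambda>x. ennreal (indicator S2 x))) borel Y) (\<lambda>_. ennreal k)"
  have YD: "\<And>g. Y \<in> measurable (density M g) borel" using Y by simp
  have "N1 = N2"
  proof (rule measure_eqI)
    show "sets N1 = sets N2" by (simp add: N1_def N2_def)
    fix B assume "B \<in> sets N1" hence B: "B \<in> sets borel" by (simp add: N1_def)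
    have pre: "Y -` B \<inter> space M \<in> sets M" using Y B by measurable
    have "emeasure N1 B = emeasure M (S1 \<inter> (Y -` B \<inter> space M))"
      unfolding N1_def using B YD pre S1
      by (simp add: emeasure_distr ennreal_indicator emeasure_restricted)
    also have "\<dots> = ennreal (k * measure M (S2 \<inter> (Y -` B \<inter> space M)))"
      using eq[OF B] by (simp add: emeasure_eq_measure)
    also have "\<dots> = ennreal k * emeasure M (S2 \<inter> (Y -` B \<inter> space M))"
      using k by (simp add: emeasure_eq_measure ennreal_mult)
    also have "\<dots> = emeasure N2 B"
      unfolding N2_def using B YD pre S2
      by (simp add: emeasure_density_const emeasure_distr ennreal_indicator emeasure_restricted)
    finally show "emeasure N1 B = emeasure N2 B" .
  qed
  have "(\<integral>\<omega>. indicator S1 \<omega> * Y \<omega> \<partial>M) = integral\<^sup>L N1 (\<lambda>x. x)"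
    unfolding N1_def using YD S1 Y by (simp add: integral_distr integral_density)
  also have "\<dots> = integral\<^sup>L N2 (\<lambda>x. x)" using \<open>N1 = N2\<close> by simp
  also have "\<dots> = k * (\<integral>\<omega>. indicator S2 \<omega> * Y \<omega> \<partial>M)"
    unfolding N2_def using YD S2 Y k by (simp add: integral_distr integral_density)
  finally show ?thesis .
qed



lemma ev_sets: "X \<in> measurable M (count_space UNIV) \<Longrightarrow> ev M X v \<in> sets M"
proof -
  assume X: "X \<in> measurable M (count_space UNIV)"
  have "ev M X v = X -` {v} \<inter> space M" by (auto simp: ev_def)
  then show ?thesis using measurable_sets[OF X, of "{v}"] by simp
qed

lemma split_meas:
  fixes X :: "'w \<Rightarrow> bool"
  assumes fm: "finite_measure M" and S: "S \<in> sets M" and X: "X \<in> measurable M (count_space UNIV)"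
  shows "measure M S = measure M (S \<inter> ev M X True) + measure M (S \<inter> ev M X False)"
proof -
  have "S \<subseteq> space M" using S by (rule sets.sets_into_space)
  then have eq: "S = (S \<inter> ev M X True) \<union> (S \<inter> ev M X False)" by (auto simp: ev_def)
  have s1: "S \<inter> ev M X True \<in> sets M" "S \<inter> ev M X False \<in> sets M" using S ev_sets[OF X] by auto
  have "measure M ((S \<inter> ev M X True) \<union> (S \<inter> ev M X False))
      = measure M (S \<inter> ev M X True) + measure M (S \<inter> ev M X False)"
    by (rule finite_measure.finite_measure_Union[OF fm s1]) (auto simp: ev_def)
  then show ?thesis using eq by simp
qed

lemma split_int:
  fixes X :: "'w \<Rightarrow> bool" and Y :: "'w \<Rightarrow> real"
  assumes S: "S \<in> sets M" and X: "X \<in> measurable M (count_space UNIV)" and Y: "integrable M Y"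
  shows "(\<integral>\<omega>. indicator S \<omega> * Y \<omega> \<partial>M)
       = (\<integral>\<omega>. indicator (S \<inter> ev M X True) \<omega> * Y \<omega> \<partial>M) + (\<integral>\<omega>. indicator (S \<inter> ev M X False) \<omega> * Y \<omega> \<partial>M)"
proof -
  have "S \<subseteq> space M" using S by (rule sets.sets_into_space)
  then have eq: "(\<lambda>\<omega>. indicator S \<omega> * Y \<omega>) = (\<lambda>\<omega>. indicator (S \<inter> ev M X True) \<omega> * Y \<omega> + indicator (S \<inter> ev M X False) \<omega> * Y \<omega>)"
    by (auto simp: ev_def indicator_def fun_eq_iff)
  have s1: "S \<inter> ev M X True \<in> sets M" "S \<inter> ev M X False \<in> sets M" using S ev_sets[OF X] by auto
  show ?thesis unfolding eq
    by (rule Bochner_Integration.integral_add)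
      (use integrable_mult_indicator[OF s1(1) Y] integrable_mult_indicator[OF s1(2) Y] in simp_all)
qed



theorem corollary1:
  fixes M :: "'w measure" and A C D :: "'w \<Rightarrow> bool" and Y :: "'w \<Rightarrow> real"
  assumes "prob_space M"
    and "A \<in> measurable M (count_space UNIV)"
    and "C \<in> measurable M (count_space UNIV)"
    and "D \<in> measurable M (count_space UNIV)"
    and "Y \<in> borel_measurable M"
    and "integrable M Y"
    and "factorizes M A C D Y"
    and "\<not> prob_space.indep_var M (count_space UNIV) C (count_space UNIV) D"
    and "\<And>x y z. measure M (ev M A x \<inter> ev M C y \<inter> ev M D z) > 0"
    and "monotone_in_D M A D Y"
  shows "min (RD_true M A C Y) (RD_crude M A Y) \<le> RD_obs M A D Y
       \<and> RD_obs M A D Y \<le> max (RD_true M A C Y) (RD_crude M A Y)"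
proof -
  interpret P: prob_space M by fact
  have fm: "finite_measure M" by (simp add: P.finite_measure_axioms)
  have eA: "\<And>v. ev M A v \<in> sets M" using ev_sets[OF assms(2)] .
  have eC: "\<And>v. ev M C v \<in> sets M" using ev_sets[OF assms(3)] .
  have eD: "\<And>v. ev M D v \<in> sets M" using ev_sets[OF assms(4)] .
  define S where "S x y z = ev M A x \<inter> ev M C y \<inter> ev M D z" for x y z
  define p where "p x y z = measure M (S x y z)" for x y z
  define I where "I x y z = (\<integral>\<omega>. indicator (S x y z) \<omega> * Y \<omega> \<partial>M)" for x y z
  define PXY where "PXY x y = measure M (ev M A x \<inter> ev M C y)" for x y
  define IXY where "IXY x y = (\<integral>\<omega>. indicator (ev M A x \<inter> ev M C y) \<omega> * Y \<omega> \<partial>M)" for x y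
  define PY where "PY y = measure M (ev M C y)" for y
  define PZY where "PZY y z = measure M (ev M D z \<inter> ev M C y)" for y z
  define e where "e x y = condE M Y (ev M A x \<inter> ev M C y)" for x y
  have Ss: "S x y z \<in> sets M" for x y z unfolding S_def using eA eC eD by auto
  have ppos: "p x y z > 0" for x y z unfolding p_def S_def using assms(9) .
  have d1: "PXY x y = p x y True + p x y False" for x y
    unfolding PXY_def p_def S_def by (rule split_meas[OF fm _ assms(4)]) (use eA eC in auto)
  have d2: "IXY x y = I x y True + I x y False" for x y
    unfolding IXY_def I_def S_def by (rule split_int[OF _ assms(4,6)]) (use eA eC in auto)
  have d5: "PZY y z = p True y z + p False y z" for y z
    using split_meas[OF fm _ assms(2), of "ev M D z \<inter> ev M C y"] eD eC
    unfolding PZY_def p_def S_def by (simp add: Int_ac)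
  have d6: "PY y = PXY True y + PXY False y" for y
    using split_meas[OF fm _ assms(2), of "ev M C y"] eC
    unfolding PY_def PXY_def by (simp add: Int_ac)
  have d7: "PY y = PZY y True + PZY y False" for y
    using split_meas[OF fm _ assms(4), of "ev M C y"] eC
    unfolding PY_def PZY_def by (simp add: Int_ac)
  have PXYpos: "PXY x y > 0" for x y using d1 ppos by (simp add: add_pos_pos)
  have PZYpos: "PZY y z > 0" for y z using d5 ppos by (simp add: add_pos_pos)
  have PYpos: "PY y > 0" for y using d6 PXYpos by (simp add: add_pos_pos)
  have Fac: "\<And>x y z B. B \<in> sets borel \<Longrightarrow>
        measure M (ev M A x \<inter> ev M C y \<inter> ev M D z \<inter> (Y -` B \<inter> space M)) =
          measure M (ev M C y)
        * (measure M (ev M D z \<inter> ev M C y) / measure M (ev M C y))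
        * (measure M (ev M A x \<inter> ev M C y) / measure M (ev M C y))
        * (measure M ((Y -` B \<inter> space M) \<inter> ev M A x \<inter> ev M C y) / measure M (ev M A x \<inter> ev M C y))"
    using assms(7) unfolding factorizes_def by (elim allE impE)
  have fac0: "p x y z = PZY y z * PXY x y / PY y" for x y z
  proof -
    have "measure M (ev M A x \<inter> ev M C y \<inter> ev M D z \<inter> (Y -` UNIV \<inter> space M)) =
          measure M (ev M C y)
        * (measure M (ev M D z \<inter> ev M C y) / measure M (ev M C y))
        * (measure M (ev M A x \<inter> ev M C y) / measure M (ev M C y))
        * (measure M ((Y -` UNIV \<inter> space M) \<inter> ev M A x \<inter> ev M C y) / measure M (ev M A x \<inter> ev M C y))"
      by (rule Fac) simp
    moreover have "ev M A x \<inter> ev M C y \<inter> ev M D z \<inter> (Y -` UNIV \<inter> space M) = S x y z"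
      by (auto simp: S_def ev_def)
    moreover have "(Y -` UNIV \<inter> space M) \<inter> ev M A x \<inter> ev M C y = ev M A x \<inter> ev M C y"
      by (auto simp: ev_def)
    ultimately have "p x y z = PY y * (PZY y z / PY y) * (PXY x y / PY y) * (PXY x y / PXY x y)"
      unfolding p_def PY_def PZY_def PXY_def by simp
    then show ?thesis using PYpos[of y] PXYpos[of x y] by (simp add: field_simps)
  qed
  have IE: "I x y z = p x y z * e x y" for x y z
  proof -
    have "I x y z = (p x y z / PXY x y) * IXY x y"
      unfolding I_def IXY_def
    proof (rule G[OF fm Ss _ assms(5)])
      show "ev M A x \<inter> ev M C y \<in> sets M" using eA eC by auto
      show "0 \<le> p x y z / PXY x y" using ppos[of x y z] PXYpos[of x y] by simp
      fix B :: "real set" assume B: "B \<in> sets borel"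
      have "measure M (ev M A x \<inter> ev M C y \<inter> ev M D z \<inter> (Y -` B \<inter> space M)) =
          measure M (ev M C y)
        * (measure M (ev M D z \<inter> ev M C y) / measure M (ev M C y))
        * (measure M (ev M A x \<inter> ev M C y) / measure M (ev M C y))
        * (measure M ((Y -` B \<inter> space M) \<inter> ev M A x \<inter> ev M C y) / measure M (ev M A x \<inter> ev M C y))"
        using B by (rule Fac)
      moreover have "(Y -` B \<inter> space M) \<inter> ev M A x \<inter> ev M C y = (ev M A x \<inter> ev M C y) \<inter> (Y -` B \<inter> space M)"
        by blast
      ultimately have "measure M (S x y z \<inter> (Y -` B \<inter> space M)) =
          PY y * (PZY y z / PY y) * (PXY x y / PY y)
          * (measure M ((ev M A x \<inter> ev M C y) \<inter> (Y -` B \<inter> space M)) / PXY x y)"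
        unfolding S_def PY_def PZY_def PXY_def by simp
      then show "measure M (S x y z \<inter> (Y -` B \<inter> space M)) =
          p x y z / PXY x y * measure M ((ev M A x \<inter> ev M C y) \<inter> (Y -` B \<inter> space M))"
        unfolding fac0 using PYpos[of y] PXYpos[of x y] by (simp add: field_simps)
    qed
    then show ?thesis unfolding e_def condE_def IXY_def PXY_def by simp
  qed
  define q where "q y = PZY y True / PY y" for y
  define qz where "qz y z = (if z then q y else 1 - q y)" for y z
  have cell: "p x y z = PXY x y * qz y z" for x y z
  proof (cases z)
    case True then show ?thesis unfolding fac0 qz_def q_def by simp
  next
    case False
    have "PZY y False = PY y - PZY y True" using d7[of y] by simp
    then have "PZY y False * PXY x y / PY y = PXY x y * ((PY y - PZY y True) / PY y)" by simp
    also have "(PY y - PZY y True) / PY y = 1 - PZY y True / PY y"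
      using PYpos[of y] by (simp add: diff_divide_distrib)
    finally show ?thesis unfolding fac0 qz_def q_def using False by simp
  qed
  have q0: "0 < q y" for y unfolding q_def using PZYpos PYpos by simp
  have q1: "q y < 1" for y unfolding q_def using PZYpos[of y False] PYpos[of y] d7[of y] by simp
  have sum1: "PY True + PY False = 1"
  proof -
    have "measure M (space M) = measure M (space M \<inter> ev M C True) + measure M (space M \<inter> ev M C False)"
      by (rule split_meas[OF fm sets.top assms(3)])
    moreover have "space M \<inter> ev M C v = ev M C v" for v by (auto simp: ev_def)
    ultimately show ?thesis unfolding PY_def using P.prob_space by simp
  qed
  have IXYe: "IXY x y = PXY x y * e x y" for x y
    unfolding d2 d1 IE by (simp add: algebra_simps)
  have CE: "condE M Y (ev M A x \<inter> ev M D z)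
     = (PXY x True * qz True z * e x True + PXY x False * qz False z * e x False)
       / (PXY x True * qz True z + PXY x False * qz False z)" for x z
  proof -
    have "(\<integral>\<omega>. indicator (ev M A x \<inter> ev M D z) \<omega> * Y \<omega> \<partial>M) = I x True z + I x False z"
      using split_int[OF _ assms(3,6), of "ev M A x \<inter> ev M D z"] eA eD
      unfolding I_def S_def by (simp add: Int_ac)
    moreover have "measure M (ev M A x \<inter> ev M D z) = p x True z + p x False z"
      using split_meas[OF fm _ assms(3), of "ev M A x \<inter> ev M D z"] eA eD
      unfolding p_def S_def by (simp add: Int_ac)
    ultimately show ?thesis unfolding condE_def IE cell by simp
  qed
  have PD: "measure M (ev M D z) = PXY True True * qz True z + PXY True False * qz False z
      + PXY False True * qz True z + PXY False False * qz False z" for z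
  proof -
    have "measure M (ev M D z) = measure M (ev M D z \<inter> ev M A True) + measure M (ev M D z \<inter> ev M A False)"
      using split_meas[OF fm eD assms(2)] .
    moreover have "measure M (ev M D z \<inter> ev M A x) = p x True z + p x False z" for x
      using split_meas[OF fm _ assms(3), of "ev M D z \<inter> ev M A x"] eA eD
      unfolding p_def S_def by (simp add: Int_ac)
    ultimately show ?thesis unfolding cell by simp
  qed
  have CA: "condE M Y (ev M A x) = (PXY x True * e x True + PXY x False * e x False) / (PXY x True + PXY x False)" for x
  proof -
    have "(\<integral>\<omega>. indicator (ev M A x) \<omega> * Y \<omega> \<partial>M) = IXY x True + IXY x False"
      using split_int[OF eA assms(3,6), of x] unfolding IXY_def .
    moreover have "measure M (ev M A x) = PXY x True + PXY x False"
      using split_meas[OF fm eA assms(3), of x] unfolding PXY_def .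
    ultimately show ?thesis unfolding condE_def IXYe by simp
  qed
  have PXYp: "PXY True True > 0" "PXY False True > 0" "PXY True False > 0" "PXY False False > 0"
    using PXYpos by auto
  have piF: "PY False = 1 - (PXY True True + PXY False True)" using sum1 d6[of True] by simp
  note c = core[OF PXYp q0[of True] q1[of True] q0[of False] q1[of False],
      of "e True True" "e True False" "e False True" "e False False"]
  have s1: "PXY True True + PXY False True + PXY True False + PXY False False = 1"
    using sum1 d6[of True] d6[of False] by simp
  have mono': "((PXY True True * (1 - q True) * e True True + PXY True False * (1 - q False) * e True False) /
      (PXY True True * (1 - q True) + PXY True False * (1 - q False))
      \<le> (PXY True True * q True * e True True + PXY True False * q False * e True False) /
         (PXY True True * q True + PXY True False * q False) \<and>
      (PXY False True * (1 - q True) * e False True + PXY False False * (1 - q False) * e False False) /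
      (PXY False True * (1 - q True) + PXY False False * (1 - q False))
      \<le> (PXY False True * q True * e False True + PXY False False * q False * e False False) /
         (PXY False True * q True + PXY False False * q False)) \<or>
     ((PXY True True * q True * e True True + PXY True False * q False * e True False) /
      (PXY True True * q True + PXY True False * q False)
      \<le> (PXY True True * (1 - q True) * e True True + PXY True False * (1 - q False) * e True False) /
         (PXY True True * (1 - q True) + PXY True False * (1 - q False)) \<and>
      (PXY False True * q True * e False True + PXY False False * q False * e False False) /
      (PXY False True * q True + PXY False False * q False)
      \<le> (PXY False True * (1 - q True) * e False True + PXY False False * (1 - q False) * e False False) /
         (PXY False True * (1 - q True) + PXY False False * (1 - q False)))"
    using assms(10) unfolding monotone_in_D_def nondecr_in_D_def nonincr_in_D_def CE qz_def by simp
  note c2 = c[OF s1 mono']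
  have om: "1 - (PXY True True + PXY False True) = PXY True False + PXY False False" using s1 by simp
  have Pd1: "measure M (ev M D True) = (PXY True True + PXY False True) * q True + (1 - (PXY True True + PXY False True)) * q False"
    unfolding PD qz_def om by (simp add: algebra_simps)
  have "measure M (ev M D False) = (PXY True True + PXY False True + PXY True False + PXY False False)
      - ((PXY True True + PXY False True) * q True + (PXY True False + PXY False False) * q False)"
    unfolding PD qz_def by (simp add: algebra_simps)
  then have Pd0: "measure M (ev M D False) = 1 - ((PXY True True + PXY False True) * q True + (1 - (PXY True True + PXY False True)) * q False)"
    unfolding s1 om .
  have RDt: "RD_true M A C Y = e True True * (PXY True True + PXY False True) + e True False * (1 - (PXY True True + PXY False True))
      - e False True * (PXY True True + PXY False True) - e False False * (1 - (PXY True True + PXY False True))"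
    unfolding RD_true_def e_def[symmetric] PY_def[symmetric] piF d6[of True] ..
  show ?thesis
    using c2 unfolding RDt RD_crude_def CA RD_obs_def CE Pd1 Pd0 qz_def
    by (simp add: mult.commute)
qed

end
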